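(* For every positive integer $n$, $$\sum_{k=0}^{n-1}\binom{n}{k}^{-2}=\frac{(n+1)!\,(n+1)^2}{(n+\frac{3}{2})!\,4^n}\sum_{j=0}^{n-1}\frac{(3j^3+12j^2+18j+10)\,4^j\,(j+\frac32)!}{(j+1)^2\,(j+1)!\,(j+2)^3}.$$
   Context: Here factorials of non-integers are defined via the Gamma function: $x!:=\Gamma(x+1)$ for all real $x>-1$. *)

theory Defs
  imports "HOL-Analysis.Analysis"
begin

text \<open>Factorial of a real argument via the Gamma function: x! = Gamma(x+1), for x > -1.\<close>
definition gfact :: "real \<Rightarrow> real" where
  "gfact x = Gamma (x + 1)"

end

theory Submission
  imports Defs
begin

definition tt :: "nat \<Rightarrow> nat \<Rightarrow> real" where
  "tt n k = (fact k * fact (n-k) / fact n)^2"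

definition uu :: "nat \<Rightarrow> real" where
  "uu n = (\<Sum>k\<le>n. tt n k)"

lemma gfact_step: "gfact (real (Suc n) + 3/2) = (real n + 5/2) * gfact (real n + 3/2)"
proof -
  have ne: "real n + 5/2 \<notin> \<int>\<^sub>\<le>\<^sub>0"
    using nonpos_Ints_nonpos[of "real n + 5/2"] by (auto)
  have "gfact (real (Suc n) + 3/2) = Gamma ((real n + 5/2) + 1)"
    unfolding gfact_def by (simp add: algebra_simps)
  also have "\<dots> = (real n + 5/2) * Gamma (real n + 5/2)"
    using Gamma_plus1[OF ne] .
  also have "Gamma (real n + 5/2) = gfact (real n + 3/2)"
    unfolding gfact_def by (simp add: algebra_simps)
  finally show ?thesis .
qed

lemma gfact_pos: "gfact (real n + 3/2) > 0"
  unfolding gfact_def by (intro Gamma_real_pos) simp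

lemma binom_tt: "k \<le> n \<Longrightarrow> 1 / (real (n choose k))^2 = tt n k"
  unfolding tt_def by (simp add: binomial_fact power_divide)

lemma tt_succ: "k \<le> n \<Longrightarrow> tt (Suc n) k = tt n k * (real n + 1 - real k)^2 / (real n + 1)^2"
proof -
  assume k: "k \<le> n"
  have "fact (Suc n - k) = (real n + 1 - real k) * (fact (n - k) :: real)"
    using k by (simp add: Suc_diff_le of_nat_diff)
  moreover have "fact (Suc n) = (real n + 1) * (fact n :: real)" by simp
  ultimately have "tt (Suc n) k = (fact k * ((real n + 1 - real k) * fact (n - k)) / ((real n + 1) * fact n))^2"
    unfolding tt_def by (simp only:)
  then show ?thesis unfolding tt_def
    by (simp add: power_divide power_mult_distrib ac_simps)
qed

definition HH :: "nat \<Rightarrow> nat \<Rightarrow> real" where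
  "HH n k = (fact k * fact (n + 1 - k) / fact n)^2 * (2 * real k - 3 * (real n + 2))"

lemma HH_step: "k \<le> n \<Longrightarrow> HH n (Suc k) - HH n k =
   tt n k * (2 * (2 * real n + 5) * (real n + 1 - real k)^2 - (real n + 2)^3)"
proof -
  assume k: "k \<le> n"
  have a: "fact (n + 1 - k) = (real n + 1 - real k) * (fact (n - k) :: real)"
    using k by (simp add: Suc_diff_le of_nat_diff)
  have b: "fact (n + 1 - Suc k) = (fact (n - k) :: real)" by simp
  have c: "fact (Suc k) = (real k + 1) * (fact k :: real)" by simp
  define t where "t = tt n k"
  have HS: "HH n (Suc k) = t * (real k + 1)^2 * (2 * real k + 2 - 3 * (real n + 2))"
    unfolding HH_def t_def tt_def b c by (simp only: power_mult_distrib power_divide) (simp add: algebra_simps)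
  have H: "HH n k = t * (real n + 1 - real k)^2 * (2 * real k - 3 * (real n + 2))"
    unfolding HH_def t_def tt_def a by (simp only: power_mult_distrib power_divide) (simp add: algebra_simps)
  show ?thesis unfolding HS H t_def[symmetric] by (simp add: algebra_simps power2_eq_square power3_eq_cube)
qed

lemma key_sum: "(\<Sum>k\<le>n. tt n k * (2 * (2 * real n + 5) * (real n + 1 - real k)^2 - (real n + 2)^3))
   = 2 * (real n + 1)^3"
proof -
  have "(\<Sum>k\<le>n. tt n k * (2 * (2 * real n + 5) * (real n + 1 - real k)^2 - (real n + 2)^3))
      = (\<Sum>k<Suc n. HH n (Suc k) - HH n k)"
    by (rule sum.cong) (auto simp: HH_step lessThan_Suc_atMost)
  also have "\<dots> = HH n (Suc n) - HH n 0" by (rule sum_lessThan_telescope)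
  also have "\<dots> = 2 * (real n + 1)^3"
  proof -
    have f: "fact (Suc n) / fact n = (real n + 1)" by (simp add: field_simps)
    have "HH n (Suc n) = (fact (Suc n) / fact n)^2 * (2 * real (Suc n) - 3 * (real n + 2))"
      unfolding HH_def by simp
    moreover have "HH n 0 = (fact (Suc n) / fact n)^2 * (- 3 * (real n + 2))"
      unfolding HH_def by simp
    ultimately show ?thesis unfolding f by (simp add: algebra_simps power2_eq_square power3_eq_cube)
  qed
  finally show ?thesis .
qed

lemma uu_rec: "2 * (real n + 1)^2 * (2 * real n + 5) * uu (Suc n)
   = (real n + 2)^3 * uu n + 6 * (real n + 1)^2 * (real n + 2)"
proof -
  have "uu (Suc n) = (\<Sum>k\<le>n. tt (Suc n) k) + 1"
    unfolding uu_def by (simp add: tt_def)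
  also have "(\<Sum>k\<le>n. tt (Suc n) k) = (\<Sum>k\<le>n. tt n k * (real n + 1 - real k)^2) / (real n + 1)^2"
    by (simp add: tt_succ sum_divide_distrib)
  finally have u: "uu (Suc n) = (\<Sum>k\<le>n. tt n k * (real n + 1 - real k)^2) / (real n + 1)^2 + 1" .
  define S where "S = (\<Sum>k\<le>n. tt n k * (real n + 1 - real k)^2)"
  have ks: "2 * (2 * real n + 5) * S - (real n + 2)^3 * uu n
      = 2 * (real n + 1)^3"
  proof -
    have "(\<Sum>k\<le>n. tt n k * (2 * (2 * real n + 5) * (real n + 1 - real k)^2 - (real n + 2)^3))
      = (\<Sum>k\<le>n. 2 * (2 * real n + 5) * (tt n k * (real n + 1 - real k)^2) - (real n + 2)^3 * tt n k)"
      by (rule sum.cong) (auto simp: algebra_simps)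
    also have "\<dots> = 2 * (2 * real n + 5) * S - (real n + 2)^3 * uu n"
      unfolding S_def uu_def by (simp add: sum_subtractf sum_distrib_left)
    finally show ?thesis using key_sum[of n] by simp
  qed
  have pos: "(real n + 1)^2 \<noteq> 0" by simp
  have u2: "uu (Suc n) * (real n + 1)^2 = S + (real n + 1)^2" unfolding u S_def[symmetric] using pos
    by (simp add: field_simps)
  have "2 * (real n + 1)^2 * (2 * real n + 5) * uu (Suc n) = 2 * (2 * real n + 5) * (uu (Suc n) * (real n + 1)^2)"
    by (simp add: algebra_simps)
  also have "\<dots> = 2 * (2 * real n + 5) * S + 2 * (2 * real n + 5) * (real n + 1)^2"
    unfolding u2 by (simp add: algebra_simps)
  also have "\<dots> = (real n + 2)^3 * uu n + 6 * (real n + 1)^2 * (real n + 2)"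
    using ks by (simp add: algebra_simps power2_eq_square power3_eq_cube)
  finally show ?thesis .
qed

lemma alg:
  fixes x g F q T1 u1 u2 :: real
  assumes "g > 0" "F > 0" "q > 0" "x \<ge> 0"
   "u1 = 1 + F * (x+2)^2 * T1 / (g * q)"
   "2*(x+2)^2*(2*x+7) * u2 = (x+3)^3 * u1 + 6*(x+2)^2*(x+3)"
  shows "(u2-1)*(x+1+5/2)*g*(4*q) = ((x+3)*F)*(x+3)^2*(T1 + (3*(x+1)^3+12*(x+1)^2+18*(x+1)+10)*q*g/((x+2)^2*F*(x+3)^3))"
proof -
  define c where "c = 3*(x+1)^3+12*(x+1)^2+18*(x+1)+10"
  define S1 where "S1 = F * (x+2)^2 * T1 / (g * q)"
  have d: "2*(x+2)^2*(2*x+7) \<noteq> 0" using assms by simp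
  have cc: "(x+3)^3 + 6*(x+2)^2*(x+3) - 2*(x+2)^2*(2*x+7) = c"
    unfolding c_def by (simp add: algebra_simps power2_eq_square power3_eq_cube)
  have "2*(x+2)^2*(2*x+7) * (u2 - 1) = (x+3)^3 * S1 + ((x+3)^3 + 6*(x+2)^2*(x+3) - 2*(x+2)^2*(2*x+7))"
    using assms(6) unfolding assms(5) S1_def by (simp add: algebra_simps)
  hence e: "2*(x+2)^2*(2*x+7) * (u2 - 1) = (x+3)^3 * S1 + c" using cc by simp
  have "(u2-1)*(x+1+5/2)*g*(4*q) = (2*(x+2)^2*(2*x+7) * (u2 - 1)) * g * q / (x+2)^2"
    using assms(1-4) by (simp add: field_simps)
  also have "\<dots> = ((x+3)^3 * S1 + c) * g * q / (x+2)^2" unfolding e ..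
  also have "\<dots> = (x+3)^3 * F * T1 + c * g * q / (x+2)^2"
    unfolding S1_def using assms(1-4) by (simp add: field_simps)
  also have "\<dots> = ((x+3)*F)*(x+3)^2*(T1 + c*q*g/((x+2)^2*F*(x+3)^3))"
    using assms(1-4) by (simp add: field_simps) algebra
  finally show ?thesis unfolding c_def .
qed

definition aa :: "nat \<Rightarrow> real" where
  "aa j = (3 * real j^3 + 12 * real j^2 + 18 * real j + 10) * 4^j * gfact (real j + 3/2)
        / ((real j + 1)^2 * fact (j+1) * (real j + 2)^3)"

lemma claim: "(uu (Suc m) - 1) * gfact (real (Suc m) + 3/2) * 4^(Suc m)
   = fact (Suc m + 1) * (real (Suc m) + 1)^2 * (\<Sum>j=0..m. aa j)"
proof (induction m)
  case 0
  have g: "gfact (real (Suc 0) + 3/2) = (5/2) * gfact (3/2)"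
    using gfact_step[of 0] by simp
  have u: "uu 1 = 2" unfolding uu_def tt_def by (simp add: numeral_2_eq_2)
  show ?case using u g by (simp add: aa_def)
next
  case (Suc m)
  define x where "x = real m"
  define g where "g = gfact (real (Suc m) + 3/2)"
  define F where "F = (fact (Suc m + 1) :: real)"
  define q where "q = (4::real)^(Suc m)"
  define T1 where "T1 = (\<Sum>j=0..m. aa j)"
  have gp: "g > 0" unfolding g_def using gfact_pos[of "Suc m"] by simp
  have Fp: "F > 0" unfolding F_def by simp
  have qp: "q > 0" unfolding q_def by simp
  have xp: "x \<ge> 0" unfolding x_def by simp
  have IH: "uu (Suc m) = 1 + F * (x+2)^2 * T1 / (g * q)"
    using Suc.IH gp qp unfolding g_def[symmetric] F_def[symmetric] q_def[symmetric] T1_def[symmetric]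
    by (simp add: field_simps x_def)
  have R: "2*(x+2)^2*(2*x+7) * uu (Suc (Suc m)) = (x+3)^3 * uu (Suc m) + 6*(x+2)^2*(x+3)"
    using uu_rec[of "Suc m"] unfolding x_def by (simp add: algebra_simps)
  note A = alg[OF gp Fp qp xp IH R]
  have g2: "gfact (real (Suc (Suc m)) + 3/2) = (x+1+5/2) * g"
    unfolding g_def x_def using gfact_step[of "Suc m"] by simp
  have F2: "fact (Suc (Suc m) + 1) = (x+3) * F"
    unfolding F_def x_def by (simp add: algebra_simps)
  have q2: "(4::real)^(Suc (Suc m)) = 4 * q" unfolding q_def by simp
  have a2: "aa (Suc m) = (3*(x+1)^3+12*(x+1)^2+18*(x+1)+10)*q*g/((x+2)^2*F*(x+3)^3)"
    unfolding aa_def x_def q_def g_def F_def by (simp add: algebra_simps)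
  have T2: "(\<Sum>j=0..Suc m. aa j) = T1 + aa (Suc m)" unfolding T1_def by simp
  have r2: "real (Suc (Suc m)) + 1 = x + 3" unfolding x_def by simp
  show ?case unfolding g2 F2 q2 T2 a2 r2 using A by (simp add: algebra_simps)
qed

theorem theorem1:
  fixes n :: nat
  assumes "n \<ge> 1"
  shows "(\<Sum>k=0..n-1. 1 / (real (n choose k))^2) =
    (fact (n+1) * (real n + 1)^2) / (gfact (real n + 3/2) * 4^n) *
    (\<Sum>j=0..n-1. (3 * real j^3 + 12 * real j^2 + 18 * real j + 10) * 4^j * gfact (real j + 3/2)
        / ((real j + 1)^2 * fact (j+1) * (real j + 2)^3))"
proof -
  obtain m where n: "n = Suc m" using assms by (cases n) auto
  have S: "(\<Sum>k=0..n-1. 1 / (real (n choose k))^2) = uu n - 1"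
  proof -
    have "(\<Sum>k=0..n-1. 1 / (real (n choose k))^2) = (\<Sum>k=0..m. tt n k)"
      using n by (intro sum.cong) (auto simp: binom_tt)
    moreover have "uu n = (\<Sum>k=0..m. tt n k) + tt n n"
      unfolding uu_def n by (simp add: atLeast0AtMost)
    moreover have "tt n n = 1" unfolding tt_def by simp
    ultimately show ?thesis by simp
  qed
  have T: "(\<Sum>j=0..n-1. (3 * real j^3 + 12 * real j^2 + 18 * real j + 10) * 4^j * gfact (real j + 3/2)
        / ((real j + 1)^2 * fact (j+1) * (real j + 2)^3)) = (\<Sum>j=0..m. aa j)"
    unfolding aa_def n by simp
  have gp: "gfact (real n + 3/2) > 0" using gfact_pos .
  show ?thesis unfolding S T using claim[of m] gp unfolding n[symmetric]
    by (simp add: field_simps)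
qed

end
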